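(* Fix $n\ge 3$, and assume that for all positive integers $w_1,\ldots,w_{n-1}$ one has either $\mathrm{ML}(w_1,\ldots,w_{n-1})=\frac{s}{(n-1)s+1}$ for some $s\in\mathbb{N}$ or $\mathrm{ML}(w_1,\ldots,w_{n-1})\ge\frac{1}{n-1}$. Let $v_1<\cdots<v_{n-1}$ be positive integers with $\mathrm{ML}(v_1,\ldots,v_{n-1})=L>\frac1n$. Then $\mathrm{ML}(v_1,\ldots,v_n)\ge\frac1n$ for every positive integer $v_n$ with $v_n\ge(2n-1)v_{n-1}$.
   Context: For a real number $x$, $\Vert x\Vert$ denotes the distance from $x$ to the nearest integer. For positive integers $v_1,\ldots,v_k$, the maximum loneliness is $\mathrm{ML}(v_1,\ldots,v_k)=\max_{t\in\mathbb{R}}\min_{1\le i\le k}\Vert t v_i\Vert$. Here $\mathbb{N}=\{1,2,3,\ldots\}$. *)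

theory Defs
  imports Complex_Main
begin

definition nint_dist :: "real \<Rightarrow> real" where
  "nint_dist x = \<bar>x - real_of_int (round x)\<bar>"

text \<open>Maximum loneliness of v 1, ..., v k (the maximum is attained, so it equals the supremum).\<close>
definition max_loneliness :: "nat \<Rightarrow> (nat \<Rightarrow> nat) \<Rightarrow> real" where
  "max_loneliness k v = (SUP t::real. Min ((\<lambda>i. nint_dist (t * real (v i))) ` {1..k}))"

end

theory Submission
  imports Defs
begin

lemma nd_le: "nint_dist x \<le> \<bar>x - of_int m\<bar>"
  unfolding nint_dist_def by (rule round_diff_minimal)

lemma nd_half: "nint_dist x \<le> 1/2"
  unfolding nint_dist_def using of_int_round_ge[of x] of_int_round_le[of x] by linarith

lemma nd_nonneg: "nint_dist x \<ge> 0"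
  unfolding nint_dist_def by simp

lemma nd_lip: "nint_dist y \<ge> nint_dist x - \<bar>y - x\<bar>"
proof -
  have "nint_dist x \<le> \<bar>x - of_int (round y)\<bar>" by (rule nd_le)
  also have "\<dots> \<le> \<bar>y - x\<bar> + nint_dist y" unfolding nint_dist_def by linarith
  finally show ?thesis by linarith
qed

lemma nd_shift:
  assumes "0 \<le> c" "c \<le> 1/2"
  shows "nint_dist (of_int k + c) = c"
proof -
  have "nint_dist (of_int k + c) \<le> c" using nd_le[of "of_int k + c" k] assms by simp
  moreover have "nint_dist (of_int k + c) \<ge> c"
  proof -
    let ?r = "round (of_int k + c)"
    have "?r \<le> k \<or> ?r \<ge> k + 1" by linarith
    hence "\<bar>of_int k + c - of_int ?r\<bar> \<ge> c"
    proof
      assume "?r \<le> k" hence "real_of_int ?r \<le> of_int k" by linarith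
      thus ?thesis using assms by linarith
    next
      assume "?r \<ge> k + 1" hence "real_of_int ?r \<ge> of_int k + 1" by linarith
      thus ?thesis using assms by linarith
    qed
    thus ?thesis unfolding nint_dist_def .
  qed
  ultimately show ?thesis by linarith
qed

lemma nd_interval:
  assumes "c \<le> 1/2" "2*c \<le> l" "0 \<le> l"
  shows "\<exists>x. a \<le> x \<and> x \<le> a + l \<and> nint_dist x \<ge> c"
proof (cases "nint_dist a \<ge> c")
  case True
  then show ?thesis using assms by (intro exI[of _ a]) simp
next
  case False
  hence c0: "c > 0" using nd_nonneg[of a] by linarith
  let ?k = "round a"
  have "\<bar>a - of_int ?k\<bar> < c" using False unfolding nint_dist_def by simp
  moreover have "nint_dist (of_int ?k + c) = c" using c0 assms by (intro nd_shift) auto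
  ultimately show ?thesis using assms
    by (intro exI[of _ "of_int ?k + c"]) auto
qed

lemma mono_v:
  assumes "\<forall>i. 1 \<le> i \<and> i < m \<longrightarrow> v i < v (Suc i)" "1 \<le> i" "i \<le> j" "j \<le> m"
  shows "v i \<le> (v j :: nat)"
  using assms(3,4)
proof (induction j rule: dec_induct)
  case base then show ?case by simp
next
  case (step j)
  then have "v j < v (Suc j)" using assms(1,2) by auto
  then show ?case using step by simp
qed

lemma bdd_F: "bdd_above (range (\<lambda>t. Min ((\<lambda>i. nint_dist (t * real (v i))) ` {1..k})))"
  if "k \<ge> 1" for k :: nat
proof (rule bdd_aboveI2)
  fix t
  have "Min ((\<lambda>i. nint_dist (t * real (v i))) ` {1..k}) \<le> nint_dist (t * real (v 1))"
    using that by (intro Min_le) auto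
  also have "\<dots> \<le> 1/2" by (rule nd_half)
  finally show "Min ((\<lambda>i. nint_dist (t * real (v i))) ` {1..k}) \<le> 1/2" .
qed

theorem lemma8p5:
  fixes n :: nat and v :: "nat \<Rightarrow> nat" and L :: real
  assumes "n \<ge> 3"
    and "\<forall>w :: nat \<Rightarrow> nat. (\<forall>i\<in>{1..n-1}. w i > 0) \<longrightarrow>
           (\<exists>s::nat. s \<ge> 1 \<and> max_loneliness (n-1) w = real s / (real (n-1) * real s + 1))
           \<or> max_loneliness (n-1) w \<ge> 1 / real (n-1)"
    and "\<forall>i\<in>{1..n-1}. v i > 0"
    and "\<forall>i. 1 \<le> i \<and> i < n-1 \<longrightarrow> v i < v (Suc i)"
    and "max_loneliness (n-1) v = L"
    and "L > 1 / real n"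
    and "v n > 0"
    and "v n \<ge> (2*n-1) * v (n-1)"
  shows "max_loneliness n v \<ge> 1 / real n"
proof -
  define F where "F k t = Min ((\<lambda>i. nint_dist (t * real (v i))) ` {1..k})" for k t
  have MLF: "max_loneliness k v = (SUP t. F k t)" for k unfolding max_loneliness_def F_def by simp
  have bddF: "bdd_above (range (F k))" if "k \<ge> 1" for k
    using bdd_F[OF that, of v] unfolding F_def by simp
  have n3: "real n \<ge> 3" using assms(1) by simp
  have rn1: "real (n-1) = real n - 1" using assms(1) by simp
  have L2: "L \<ge> 2 / (2 * real n - 1)"
  proof -
    from assms(2) assms(3) assms(5)
    have "(\<exists>s::nat. s \<ge> 1 \<and> L = real s / (real (n-1) * real s + 1)) \<or> L \<ge> 1 / real (n-1)"
      by blast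
    then show ?thesis
    proof
      assume "\<exists>s::nat. s \<ge> 1 \<and> L = real s / (real (n-1) * real s + 1)"
      then obtain s :: nat where s1: "s \<ge> 1" and Ls: "L = real s / ((real n - 1) * real s + 1)"
        using rn1 by auto
      have pos: "(real n - 1) * real s + 1 > 0" using n3 s1 by (simp add: add_pos_pos)
      have "1 / real n < real s / ((real n - 1) * real s + 1)" using assms(6) Ls by simp
      hence "(real n - 1) * real s + 1 < real s * real n" using pos n3
        by (simp add: field_simps)
      hence "real s > 1" by (simp add: algebra_simps)
      hence "s > 1" by simp
      hence "real s \<ge> 2" by simp
      hence "2 * ((real n - 1) * real s + 1) \<le> real s * (2 * real n - 1)"
        by (simp add: algebra_simps)
      hence "2 / (2 * real n - 1) * ((real n - 1) * real s + 1) \<le> real s"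
        using n3 by (simp add: divide_le_eq mult.commute)
      thus ?thesis using Ls pos by (simp add: le_divide_eq)
    next
      assume "L \<ge> 1 / real (n-1)"
      moreover have "2 / (2 * real n - 1) \<le> 1 / (real n - 1)" using n3
        by (simp add: field_simps)
      ultimately show ?thesis using rn1 by simp
    qed
  qed
  define M where "M = 1 / real n"
  define \<delta> where "\<delta> = L - M"
  define V where "V = real (v (n-1))"
  have Vpos: "V > 0" unfolding V_def using assms(3,1) by auto
  have vleV: "real (v i) \<le> V" if "i \<in> {1..n-1}" for i
    unfolding V_def using mono_v[OF assms(4), of i "n-1"] that by auto
  have vn: "real (v n) \<ge> (2 * real n - 1) * V"
  proof -
    have "real (v n) \<ge> real ((2*n-1) * v (n-1))" using assms(8) by linarith
    moreover have "real (2*n-1) = 2 * real n - 1" using assms(1) by simp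
    ultimately show ?thesis unfolding V_def by simp
  qed
  have dgt: "\<delta> \<ge> 2 / (2 * real n - 1) - 1 / real n" unfolding \<delta>_def M_def using L2 by simp
  have Delta: "2 / (2 * real n - 1) - 1 / real n = 1 / (real n * (2 * real n - 1))"
    using n3 by (simp add: field_simps)
  have dpos: "\<delta> > 0" unfolding \<delta>_def M_def using assms(6) by simp
  have key: "M - (2 * real n - 1) * \<epsilon> \<le> (SUP t. F n t)" if e0: "\<epsilon> > 0" and e1: "\<epsilon> < \<delta>" for \<epsilon>
  proof -
    have "L - \<epsilon> < (SUP t. F (n-1) t)" using assms(5) MLF e0 by simp
    then obtain t0 where t0: "L - \<epsilon> < F (n-1) t0"
      using less_cSUP_iff[of UNIV "F (n-1)"] bddF[of "n-1"] assms(1) by auto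
    define h where "h = (\<delta> - \<epsilon>) / V"
    have hpos: "h > 0" unfolding h_def using e1 Vpos by simp
    define a where "a = (t0 - h) * real (v n)"
    define l where "l = 2 * h * real (v n)"
    define c where "c = M - (2 * real n - 1) * \<epsilon>"
    have "M \<le> 1/2" unfolding M_def using n3 by simp
    moreover have "(2 * real n - 1) * \<epsilon> \<ge> 0" using n3 e0 by simp
    ultimately have c_half: "c \<le> 1/2" unfolding c_def by linarith
    have "2 * c \<le> l"
    proof -
      have "(\<delta> - \<epsilon>) * (2 * real n - 1) \<ge> c"
      proof -
        have "c = (1 / (real n * (2 * real n - 1)) - \<epsilon>) * (2 * real n - 1)"
          unfolding c_def M_def using n3 by (simp add: field_simps)
        also have "\<dots> \<le> (\<delta> - \<epsilon>) * (2 * real n - 1)"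
          using dgt Delta n3 by (intro mult_right_mono) auto
        finally show ?thesis .
      qed
      moreover have "h * real (v n) \<ge> h * ((2 * real n - 1) * V)"
        using hpos vn by (intro mult_left_mono) auto
      moreover have "h * ((2 * real n - 1) * V) = (\<delta> - \<epsilon>) * (2 * real n - 1)"
        unfolding h_def using Vpos by simp
      ultimately show ?thesis unfolding l_def by linarith
    qed
    then obtain x where x1: "a \<le> x" and x2: "x \<le> a + l" and xc: "nint_dist x \<ge> c"
    proof -
      have "0 \<le> l" using hpos assms(7) unfolding l_def by simp
      then show ?thesis using nd_interval[OF c_half \<open>2 * c \<le> l\<close>, of a] that by blast
    qed
    have vnpos: "real (v n) > 0" using assms(7) by simp
    define t where "t = x / real (v n)"
    have tx: "t * real (v n) = x" unfolding t_def using vnpos by simp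
    have tdist: "\<bar>t - t0\<bar> \<le> h"
    proof -
      have "t0 - h \<le> t" using x1 vnpos unfolding a_def t_def by (simp add: field_simps)
      moreover have "t \<le> t0 + h" using x2 vnpos unfolding a_def l_def t_def
        by (simp add: field_simps)
      ultimately show ?thesis by linarith
    qed
    have allc: "c \<le> nint_dist (t * real (v i))" if i: "i \<in> {1..n}" for i
      proof (cases "i = n")
        case True then show ?thesis using tx xc by simp
      next
        case False
        hence i': "i \<in> {1..n-1}" using i by auto
        have "F (n-1) t0 \<le> nint_dist (t0 * real (v i))"
          unfolding F_def using i' by (intro Min_le) auto
        moreover have "nint_dist (t * real (v i)) \<ge> nint_dist (t0 * real (v i)) - \<bar>t * real (v i) - t0 * real (v i)\<bar>"
          by (rule nd_lip)
        moreover have "\<bar>t * real (v i) - t0 * real (v i)\<bar> \<le> h * V"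
        proof -
          have "\<bar>t * real (v i) - t0 * real (v i)\<bar> = \<bar>t - t0\<bar> * real (v i)"
            by (simp add: abs_mult left_diff_distrib[symmetric])
          also have "\<dots> \<le> h * V" using tdist vleV[OF i'] hpos by (intro mult_mono) auto
          finally show ?thesis .
        qed
        moreover have "h * V = \<delta> - \<epsilon>" unfolding h_def using Vpos by simp
        moreover have "c \<le> M" unfolding c_def using e0 n3 by simp
        ultimately show ?thesis using t0 unfolding \<delta>_def by linarith
      qed
    have "F n t \<ge> c"
      unfolding F_def using assms(1) allc by (subst Min_ge_iff) auto
    also have "F n t \<le> (SUP t. F n t)" using bddF[of n] assms(1) by (intro cSUP_upper) auto
    finally show ?thesis unfolding c_def .
  qed
  have "M \<le> (SUP t. F n t)"
  proof (rule field_le_epsilon)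
    fix e :: real assume e: "e > 0"
    define \<epsilon> where "\<epsilon> = min (\<delta>/2) (e / (2 * real n - 1))"
    have "\<epsilon> > 0" unfolding \<epsilon>_def using dpos e n3 by simp
    moreover have "\<epsilon> < \<delta>" unfolding \<epsilon>_def using dpos by simp
    ultimately have "M - (2 * real n - 1) * \<epsilon> \<le> (SUP t. F n t)" by (rule key)
    moreover have "(2 * real n - 1) * \<epsilon> \<le> e"
    proof -
      have "(2 * real n - 1) * \<epsilon> \<le> (2 * real n - 1) * (e / (2 * real n - 1))"
        unfolding \<epsilon>_def using n3 by (intro mult_left_mono) auto
      also have "\<dots> = e" using n3 by simp
      finally show ?thesis .
    qed
    ultimately show "M \<le> (SUP t. F n t) + e" by linarith
  qed
  thus ?thesis unfolding M_def MLF .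
qed

end
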